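(* Let $(X,Z,A)$ be as in the context, and let $Q(\cdot\mid X)$ be any conditional cumulative distribution function (the target distribution). Define $Z_Q := Q^{-1}\big(\Pi(Z\mid X)\mid X\big)$. Then, conditionally on $X$, $Z_Q$ has distribution $Q(\cdot\mid X)$. Moreover, under the monotonicity assumption (for all $z'>z$, $A^{z'}\ge A^{z}$ with probability 1): if $Q$ stochastically dominates $\Pi$, i.e. $\Pi(z\mid X)\ge Q(z\mid X)$ for all $z\in\mathbb{R}$, then $P[A^{Z_Q}\ge A]=1$; and if $Q$ is stochastically dominated by $\Pi$ (i.e. $\Pi(z\mid X)\le Q(z\mid X)$ for all $z$), then $P[A^{Z_Q}\le A]=1$.
   Context: Observed data $O=(X,Z,A,Y)\sim P$ with covariates $X\in\mathbb{R}^d$, a continuous instrument $Z\in\mathbb{R}$ having conditional density $\pi(z\mid X)$ and conditional CDF $\Pi(z\mid X)=P(Z\le z\mid X)$, binary treatment $A\in\{0,1\}$ and outcome $Y\in\mathbb{R}$. $A^z$ denotes the potential treatment had the instrument been set to $z$; for a random instrument value $W$ (such as $Z_Q$), $A^{W}$ denotes $A^z$ evaluated at $z=W$. Consistency is assumed: $A^Z=A$. For a conditional CDF $Q(\cdot\mid X)$, $Q^{-1}(p\mid X)=\inf\{z: Q(z\mid X)\ge p\}$ is the quantile function. *)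

theory Defs
  imports "HOL-Probability.Probability"
begin

definition cond_quantile :: "(real \<Rightarrow> 'x \<Rightarrow> real) \<Rightarrow> real \<Rightarrow> 'x \<Rightarrow> real" where
  "cond_quantile Q p x = Inf {z. p \<le> Q z x}"

definition is_cond_cdf :: "(real \<Rightarrow> 'x \<Rightarrow> real) \<Rightarrow> 'x measure \<Rightarrow> bool" where
  "is_cond_cdf Q N \<longleftrightarrow>
     (\<forall>z. (\<lambda>x. Q z x) \<in> borel_measurable N) \<and>
     (\<forall>x. mono (\<lambda>z. Q z x)) \<and>
     (\<forall>x z. continuous (at_right z) (\<lambda>z. Q z x)) \<and>
     (\<forall>x. ((\<lambda>z. Q z x) \<longlongrightarrow> 0) at_bot) \<and>
     (\<forall>x. ((\<lambda>z. Q z x) \<longlongrightarrow> 1) at_top)"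

end

theory Submission imports Defs begin

context real_distribution
begin

lemma cdf_le_measure:
  assumes noatom: "\<And>x. measure M {x} = 0" and q: "0 \<le> q" "q \<le> 1"
  shows "measure M {t. cdf M t \<le> q} = q"
proof -
  let ?S = "{t. cdf M t \<le> q}"
  have cont: "\<And>x. isCont (cdf M) x" using isCont_cdf noatom by simp
  show ?thesis
  proof (cases "q = 1")
    case True then have "?S = UNIV" using cdf_bounded_prob by auto
    then show ?thesis using True prob_space by simp
  next
    case False then have q1: "q < 1" using q by simp
    show ?thesis
    proof (cases "?S = {}")
      case True
      have "q = 0"
      proof (rule ccontr)
        assume "q \<noteq> 0" then have "0 < q" using q by simp
        then have "eventually (\<lambda>t. cdf M t < q) at_bot" using cdf_lim_at_bot order_tendstoD(2) by blast
        then obtain b where "\<And>t. t \<le> b \<Longrightarrow> cdf M t < q" by (auto simp: eventually_at_bot_linorder)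
        then have "b \<in> ?S" by force
        with True show False by simp
      qed
      with True show ?thesis by simp
    next
      case False
      have "eventually (\<lambda>t. q < cdf M t) at_top" using cdf_lim_at_top_prob q1 order_tendstoD(1) by blast
      then obtain b where b: "\<And>t. t \<ge> b \<Longrightarrow> q < cdf M t" by (auto simp: eventually_at_top_linorder)
      have bdd: "bdd_above ?S"
        by (rule bdd_aboveI[of _ b]) (metis b mem_Collect_eq not_le less_imp_le)
      have closed: "closed ?S"
        by (rule closed_Collect_le) (auto intro: continuous_at_imp_continuous_on cont)
      define s where "s = Sup ?S"
      have sS: "s \<in> ?S" unfolding s_def using closed_contains_Sup[OF False bdd closed] .
      have eq: "?S = {..s}"
      proof
        show "?S \<subseteq> {..s}" unfolding s_def using bdd by (auto intro: cSup_upper)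
        show "{..s} \<subseteq> ?S" using sS cdf_nondecreasing by (auto intro: order_trans)
      qed
      have gt: "\<And>t. s < t \<Longrightarrow> q < cdf M t" using eq
        by (metis atMost_iff mem_Collect_eq not_le)
      have "q \<le> cdf M s"
      proof (rule tendsto_lowerbound)
        show "(cdf M \<longlongrightarrow> cdf M s) (at_right s)"
          using cdf_is_right_cont[of s] by (simp add: continuous_within)
        show "eventually (\<lambda>t. q \<le> cdf M t) (at_right s)"
          unfolding eventually_at_filter
          by (rule always_eventually) (auto intro: less_imp_le gt)
      qed (simp add: trivial_limit_at_right_real)
      then have "cdf M s = q" using sS by simp
      then show ?thesis using eq by (simp add: cdf_def)
    qed
  qed
qed

lemma cdf_flat:
  assumes noatom: "\<And>x. measure M {x} = 0"
  shows "measure M {t. r < t \<and> cdf M t \<le> cdf M r} = 0"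
proof -
  have [measurable]: "cdf M \<in> borel_measurable borel"
    by (rule borel_measurable_mono) (auto simp: mono_def cdf_nondecreasing)
  let ?T = "{t. cdf M t \<le> cdf M r}"
  have mT: "measure M ?T = cdf M r"
    by (rule cdf_le_measure[OF noatom cdf_nonneg cdf_bounded_prob])
  have "{t. r < t \<and> cdf M t \<le> cdf M r} = ?T - {..r}" by auto
  also have "measure M \<dots> = measure M ?T - measure M {..r}"
    by (rule finite_measure_Diff) (auto simp: cdf_nondecreasing)
  finally show ?thesis using mT by (simp add: cdf_def)
qed

lemma cdf_top:
  assumes noatom: "\<And>x. measure M {x} = 0"
  shows "measure M {t. 1 \<le> cdf M t} = 0"
proof -
  have [measurable]: "cdf M \<in> borel_measurable borel"
    by (rule borel_measurable_mono) (auto simp: mono_def cdf_nondecreasing)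
  have cont: "\<And>x. isCont (cdf M) x" using isCont_cdf noatom by simp
  let ?W = "{t. 1 \<le> cdf M t}"
  show ?thesis
  proof (cases "?W = {}")
    case True then show ?thesis by simp
  next
    case False
    have "eventually (\<lambda>t. cdf M t < 1) at_bot" using cdf_lim_at_bot order_tendstoD(2) by fastforce
    then obtain b where b: "\<And>t. t \<le> b \<Longrightarrow> cdf M t < 1" by (auto simp: eventually_at_bot_linorder)
    have bdd: "bdd_below ?W"
      by (rule bdd_belowI[of _ b]) (metis b mem_Collect_eq not_le less_imp_le)
    have closed: "closed ?W"
      by (rule closed_Collect_le) (auto intro: continuous_at_imp_continuous_on cont)
    define w where "w = Inf ?W"
    have wW: "w \<in> ?W" unfolding w_def using closed_contains_Inf[OF False bdd closed] .
    have sub: "?W \<subseteq> {w} \<union> {t. w < t \<and> cdf M t \<le> cdf M w}"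
    proof
      fix t assume t: "t \<in> ?W"
      then have "w \<le> t" unfolding w_def using bdd by (auto intro: cInf_lower)
      moreover have "cdf M t \<le> cdf M w" using wW cdf_bounded_prob[of t] by simp
      ultimately show "t \<in> {w} \<union> {t. w < t \<and> cdf M t \<le> cdf M w}" by auto
    qed
    have "measure M ?W \<le> measure M ({w} \<union> {t. w < t \<and> cdf M t \<le> cdf M w})"
      by (rule finite_measure_mono[OF sub]) measurable
    also have "\<dots> \<le> measure M {w} + measure M {t. w < t \<and> cdf M t \<le> cdf M w}"
      by (rule measure_Un_le) auto
    also have "\<dots> = 0" using noatom cdf_flat[OF noatom] by simp
    finally show ?thesis by (simp add: measure_le_0_iff)
  qed
qed

end


lemma dens_dist:
  fixes f :: "real \<Rightarrow> real"
  assumes fm[measurable]: "f \<in> borel_measurable borel" and fnn: "\<And>t. 0 \<le> f t"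
    and fn: "(\<integral>\<^sup>+t. ennreal (f t) \<partial>lborel) = 1"
  shows "real_distribution (density lborel f)"
    and "\<And>y. measure (density lborel f) {y} = 0"
    and "\<And>z. cdf (density lborel f) z = (LBINT t:{..z}. f t)"
    and "\<And>A. A \<in> sets borel \<Longrightarrow> emeasure (density lborel f) A = (\<integral>\<^sup>+t. indicator A t * ennreal (f t) \<partial>lborel)"
proof -
  show em: "\<And>A. A \<in> sets borel \<Longrightarrow> emeasure (density lborel f) A = (\<integral>\<^sup>+t. indicator A t * ennreal (f t) \<partial>lborel)"
    by (subst emeasure_density) (auto simp: mult.commute)
  show rd: "real_distribution (density lborel f)"
  proof -
    have "prob_space (density lborel f)"
      by (rule prob_spaceI) (simp add: em[of UNIV, simplified] fn)
    then show ?thesis unfolding real_distribution_def real_distribution_axioms_def by simp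
  qed
  show "\<And>y. measure (density lborel f) {y} = 0"
    by (simp add: measure_def em mult.commute[of "indicator _ _ :: ennreal"])
  have int: "integrable lborel f"
    using fn by (intro integrableI_nn_integral_finite[where x=1]) (auto simp: fnn)
  fix z
  have int2: "integrable lborel (\<lambda>t. indicator {..z} t *\<^sub>R f t)"
    by (rule integrable_mult_indicator) (auto simp: int)
  have "cdf (density lborel f) z = enn2real (\<integral>\<^sup>+t. ennreal (indicator {..z} t *\<^sub>R f t) \<partial>lborel)"
    unfolding cdf_def measure_def em[OF atMost_borel]
    by (intro arg_cong[where f=enn2real] nn_integral_cong) (auto simp: indicator_def)
  also have "\<dots> = (LBINT t:{..z}. f t)"
    unfolding set_lebesgue_integral_def
    by (subst nn_integral_eq_integral[OF int2]) (auto simp: fnn integral_nonneg_AE)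
  finally show "cdf (density lborel f) z = (LBINT t:{..z}. f t)" .
qed


lemma kernel_meas:
  fixes \<pi> :: "real \<Rightarrow> 'b::topological_space \<Rightarrow> real"
  assumes dens_meas[measurable]: "(\<lambda>(t, x). \<pi> t x) \<in> borel_measurable (borel \<Otimes>\<^sub>M borel)"
    and S[measurable]: "S \<in> sets (borel \<Otimes>\<^sub>M (borel :: 'b measure))"
  shows "(\<lambda>x. \<integral>\<^sup>+t. indicator S (t, x) * ennreal (\<pi> t x) \<partial>lborel) \<in> borel_measurable borel"
proof -
  have "(\<lambda>p. \<pi> (snd p) (fst p)) \<in> borel_measurable (borel \<Otimes>\<^sub>M lborel)"
    using measurable_compose[OF measurable_Pair[OF measurable_snd measurable_fst] dens_meas]
    by (simp add: measurable_cong_sets[OF refl sets_pair_measure_cong[OF refl sets_lborel]])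
  then have [measurable]: "(\<lambda>(x, t). \<pi> t x) \<in> borel_measurable (borel \<Otimes>\<^sub>M lborel)"
    by (simp add: case_prod_beta)
  have [measurable]: "(\<lambda>p. indicator S (snd p, fst p) :: ennreal) \<in> borel_measurable (borel \<Otimes>\<^sub>M lborel)"
    using measurable_compose[OF measurable_Pair[OF measurable_snd measurable_fst] borel_measurable_indicator[OF S]]
    by (simp add: measurable_cong_sets[OF refl sets_pair_measure_cong[OF refl sets_lborel]])
  show ?thesis
    by (rule lborel.borel_measurable_nn_integral) (simp add: case_prod_beta)
qed

lemma kernel_rep:
  fixes M :: "'a measure" and X :: "'a \<Rightarrow> 'b::topological_space" and Z :: "'a \<Rightarrow> real"
    and \<pi> :: "real \<Rightarrow> 'b \<Rightarrow> real"
  assumes P: "prob_space M" and X_meas[measurable]: "X \<in> borel_measurable M"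
    and Z_meas[measurable]: "Z \<in> borel_measurable M"
    and dens_meas[measurable]: "(\<lambda>(t, x). \<pi> t x) \<in> borel_measurable (borel \<Otimes>\<^sub>M borel)"
    and dens_nonneg: "\<And>t x. 0 \<le> \<pi> t x"
    and dens_norm: "\<And>x. (\<integral>\<^sup>+ t. ennreal (\<pi> t x) \<partial>lborel) = 1"
    and dens_cond: "\<And>C B. C \<in> sets borel \<Longrightarrow> B \<in> sets borel \<Longrightarrow>
        emeasure M {\<omega> \<in> space M. Z \<omega> \<in> C \<and> X \<omega> \<in> B}
        = (\<integral>\<^sup>+ \<omega>. indicator B (X \<omega>) *
              (\<integral>\<^sup>+ t. indicator C t * ennreal (\<pi> t (X \<omega>)) \<partial>lborel) \<partial>M)"
    and S: "S \<in> sets (borel \<Otimes>\<^sub>M (borel :: 'b measure))"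
  shows "emeasure M {\<omega>\<in>space M. (Z \<omega>, X \<omega>) \<in> S}
     = (\<integral>\<^sup>+\<omega>. (\<integral>\<^sup>+t. indicator S (t, X \<omega>) * ennreal (\<pi> t (X \<omega>)) \<partial>lborel) \<partial>M)"
  using Int_stable_pair_measure_generator[of "borel :: real measure" "borel :: 'b measure"]
    pair_measure_closed S unfolding sets_pair_measure
proof (induct rule: sigma_sets_induct_disjoint)
  case (basic A)
  then obtain a b where ab: "A = a \<times> b" "a \<in> sets borel" "b \<in> sets borel" by auto
  have seteq: "{\<omega>\<in>space M. (Z \<omega>, X \<omega>) \<in> A} = {\<omega> \<in> space M. Z \<omega> \<in> a \<and> X \<omega> \<in> b}"
    using ab by auto
  have pim: "(\<lambda>t. \<pi> t x) \<in> borel_measurable lborel" for x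
    using measurable_compose[OF measurable_Pair[OF measurable_ident_sets[OF sets_lborel] measurable_const[of x borel]] dens_meas]
    by simp
  have inner: "(\<integral>\<^sup>+t. indicator A (t, X \<omega>) * ennreal (\<pi> t (X \<omega>)) \<partial>lborel)
     = indicator b (X \<omega>) * (\<integral>\<^sup>+t. indicator a t * ennreal (\<pi> t (X \<omega>)) \<partial>lborel)" for \<omega>
  proof -
    have "(\<integral>\<^sup>+t. indicator A (t, X \<omega>) * ennreal (\<pi> t (X \<omega>)) \<partial>lborel)
      = (\<integral>\<^sup>+t. indicator b (X \<omega>) * (indicator a t * ennreal (\<pi> t (X \<omega>))) \<partial>lborel)"
      by (intro nn_integral_cong) (simp add: ab(1) indicator_times mult_ac)
    also have "\<dots> = indicator b (X \<omega>) * (\<integral>\<^sup>+t. indicator a t * ennreal (\<pi> t (X \<omega>)) \<partial>lborel)"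
      by (rule nn_integral_cmult) (use ab(2) pim in measurable)
    finally show ?thesis .
  qed
  show ?case
    using dens_cond[OF ab(2,3)] by (simp add: inner seteq)
next
  case empty
  then show ?case by simp
next
  case (compl A)
  have A[measurable]: "A \<in> sets (borel \<Otimes>\<^sub>M (borel :: 'b measure))"
    using compl(1) by (simp add: sets_pair_measure)
  let ?h = "\<lambda>S x. \<integral>\<^sup>+t. indicator S (t, x) * ennreal (\<pi> t x) \<partial>lborel"
  have pim: "(\<lambda>t. \<pi> t x) \<in> borel_measurable lborel" for x
    using measurable_compose[OF measurable_Pair[OF measurable_ident_sets[OF sets_lborel] measurable_const[of x borel]] dens_meas]
    by simp
  have hm[measurable]: "?h A \<in> borel_measurable borel" by (rule kernel_meas[OF dens_meas A])
  have hle: "?h A x \<le> 1" for x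
    unfolding dens_norm[of x, symmetric]
    by (intro nn_integral_mono) (auto simp: indicator_def)
  have hc: "?h (UNIV - A) x = 1 - ?h A x" for x
  proof -
    have "?h (UNIV - A) x = (\<integral>\<^sup>+t. ennreal (\<pi> t x) - indicator A (t, x) * ennreal (\<pi> t x) \<partial>lborel)"
      by (intro nn_integral_cong) (auto simp: indicator_def)
    also have "\<dots> = 1 - ?h A x"
    proof -
      have m1: "(\<lambda>t. ennreal (\<pi> t x)) \<in> borel_measurable lborel" using pim by simp
      have m2: "(\<lambda>t. indicator A (t, x) * ennreal (\<pi> t x)) \<in> borel_measurable lborel"
        by (intro borel_measurable_times_ennreal measurable_compose[OF measurable_Pair[OF measurable_ident_sets[OF sets_lborel] measurable_const[of x borel]] borel_measurable_indicator[OF A]]) (use pim in auto)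
      have fin: "?h A x \<noteq> \<infinity>" using hle[of x] by (auto simp: top_unique infinity_ennreal_def)
      have ae: "AE t in lborel. indicator A (t, x) * ennreal (\<pi> t x) \<le> ennreal (\<pi> t x)"
        by (auto simp: indicator_def)
      show ?thesis by (subst nn_integral_diff[OF m1 m2 fin ae]) (simp add: dens_norm)
    qed
    finally show ?thesis .
  qed
  have "{\<omega>\<in>space M. (Z \<omega>, X \<omega>) \<in> space borel \<times> space borel - A} = space M - {\<omega>\<in>space M. (Z \<omega>, X \<omega>) \<in> A}"
    by auto
  then have "emeasure M {\<omega>\<in>space M. (Z \<omega>, X \<omega>) \<in> space borel \<times> space borel - A}
      = 1 - emeasure M {\<omega>\<in>space M. (Z \<omega>, X \<omega>) \<in> A}"
    using prob_space.emeasure_space_1[OF P]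
    by (simp add: emeasure_compl prob_space.emeasure_space_1[OF P] finite_measure.emeasure_finite[OF prob_space.finite_measure[OF P]])
  also have "\<dots> = 1 - (\<integral>\<^sup>+\<omega>. ?h A (X \<omega>) \<partial>M)" using compl(2) by simp
  also have "\<dots> = (\<integral>\<^sup>+\<omega>. 1 - ?h A (X \<omega>) \<partial>M)"
  proof -
    have m1: "(\<lambda>\<omega>. 1::ennreal) \<in> borel_measurable M" by simp
    have m2: "(\<lambda>\<omega>. ?h A (X \<omega>)) \<in> borel_measurable M" by (rule measurable_compose[OF X_meas hm])
    have "(\<integral>\<^sup>+\<omega>. ?h A (X \<omega>) \<partial>M) \<le> (\<integral>\<^sup>+\<omega>. 1 \<partial>M)" by (intro nn_integral_mono hle)
    then have fin: "(\<integral>\<^sup>+\<omega>. ?h A (X \<omega>) \<partial>M) \<noteq> \<infinity>"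
      using prob_space.emeasure_space_1[OF P] by (auto simp: top_unique infinity_ennreal_def)
    have ae: "AE \<omega> in M. ?h A (X \<omega>) \<le> 1" by (simp add: hle)
    show ?thesis by (subst nn_integral_diff[OF m1 m2 fin ae]) (simp add: prob_space.emeasure_space_1[OF P])
  qed
  finally show ?case by (simp add: hc)
next
  case (union A)
  have A[measurable]: "\<And>i. A i \<in> sets (borel \<Otimes>\<^sub>M (borel :: 'b measure))"
    using union(2) by (auto simp: sets_pair_measure)
  let ?h = "\<lambda>S x. \<integral>\<^sup>+t. indicator S (t, x) * ennreal (\<pi> t x) \<partial>lborel"
  have "emeasure M {\<omega>\<in>space M. (Z \<omega>, X \<omega>) \<in> (\<Union>i. A i)} = emeasure M (\<Union>i. {\<omega>\<in>space M. (Z \<omega>, X \<omega>) \<in> A i})"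
    by (intro arg_cong[where f="emeasure M"]) auto
  also have "\<dots> = (\<Sum>i. emeasure M {\<omega>\<in>space M. (Z \<omega>, X \<omega>) \<in> A i})"
    by (rule suminf_emeasure[symmetric])
       (use union(1) in \<open>auto simp: disjoint_family_on_def\<close>)
  also have "\<dots> = (\<Sum>i. \<integral>\<^sup>+\<omega>. ?h (A i) (X \<omega>) \<partial>M)" using union(3) by simp
  also have "\<dots> = (\<integral>\<^sup>+\<omega>. (\<Sum>i. ?h (A i) (X \<omega>)) \<partial>M)"
    by (rule nn_integral_suminf[symmetric])
       (rule measurable_compose[OF X_meas kernel_meas[OF dens_meas A]])
  also have "\<dots> = (\<integral>\<^sup>+\<omega>. ?h (\<Union>i. A i) (X \<omega>) \<partial>M)"
  proof (intro nn_integral_cong)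
    fix \<omega>
    have "(\<Sum>i. ?h (A i) (X \<omega>)) = (\<integral>\<^sup>+t. (\<Sum>i. indicator (A i) (t, X \<omega>) * ennreal (\<pi> t (X \<omega>))) \<partial>lborel)"
      by (rule nn_integral_suminf[symmetric])
         (auto intro!: measurable_compose[OF measurable_Pair[OF measurable_ident_sets[OF sets_lborel] measurable_const] borel_measurable_indicator[OF A]]
         measurable_compose[OF _ dens_meas])
    also have "\<dots> = ?h (\<Union>i. A i) (X \<omega>)"
      by (intro nn_integral_cong)
         (simp add: ennreal_suminf_multc suminf_indicator[OF union(1)])
    finally show "(\<Sum>i. ?h (A i) (X \<omega>)) = ?h (\<Union>i. A i) (X \<omega>)" .
  qed
  finally show ?case .
qed


lemma cdfG_bounds:
  fixes G :: "real \<Rightarrow> real"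
  assumes mono: "mono G" and bot: "(G \<longlongrightarrow> 0) at_bot" and top: "(G \<longlongrightarrow> 1) at_top"
  shows "0 \<le> G z" "G z \<le> 1"
proof -
  show "0 \<le> G z"
  proof (rule tendsto_upperbound[OF bot])
    show "eventually (\<lambda>w. G w \<le> G z) at_bot"
      unfolding eventually_at_bot_linorder using mono by (auto simp: mono_def)
  qed simp
  show "G z \<le> 1"
  proof (rule tendsto_lowerbound[OF top])
    show "eventually (\<lambda>w. G z \<le> G w) at_top"
      unfolding eventually_at_top_linorder using mono by (auto simp: mono_def)
  qed simp
qed

lemma quantile_props:
  fixes G :: "real \<Rightarrow> real"
  assumes mono: "mono G" and rc: "\<And>z. continuous (at_right z) G"
    and bot: "(G \<longlongrightarrow> 0) at_bot"
    and u: "0 < u" "\<exists>w. u \<le> G w"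
  shows "Inf {w. u \<le> G w} \<le> z \<longleftrightarrow> u \<le> G z"
proof -
  let ?S = "{w. u \<le> G w}"
  have ne: "?S \<noteq> {}" using u by auto
  have "eventually (\<lambda>t. G t < u) at_bot" using bot u(1) order_tendstoD(2) by blast
  then obtain b where b: "\<And>t. t \<le> b \<Longrightarrow> G t < u" by (auto simp: eventually_at_bot_linorder)
  have bdd: "bdd_below ?S"
    by (rule bdd_belowI[of _ b]) (metis b mem_Collect_eq not_le less_imp_le)
  define s where "s = Inf ?S"
  have gt: "\<And>t. s < t \<Longrightarrow> u \<le> G t"
  proof -
    fix t assume "s < t"
    then obtain w where "w \<in> ?S" "w < t" unfolding s_def using cInf_less_iff[OF ne bdd] by auto
    then show "u \<le> G t" using mono by (auto simp: mono_def intro: order_trans)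
  qed
  have sS: "u \<le> G s"
  proof (rule tendsto_lowerbound)
    show "(G \<longlongrightarrow> G s) (at_right s)"
      using rc[of s] by (simp add: continuous_within)
    show "eventually (\<lambda>t. u \<le> G t) (at_right s)"
      unfolding eventually_at_filter
      by (rule always_eventually) (auto intro: gt)
  qed (simp add: trivial_limit_at_right_real)
  show ?thesis
  proof
    assume "Inf ?S \<le> z" then show "u \<le> G z" using sS mono unfolding s_def by (auto simp: mono_def intro: order_trans)
  next
    assume "u \<le> G z" then show "Inf ?S \<le> z" using bdd by (auto intro: cInf_lower)
  qed
qed

lemma quantile_le_iff:
  fixes G :: "real \<Rightarrow> real"
  assumes mono: "mono G" and rc: "\<And>z. continuous (at_right z) G"
    and bot: "(G \<longlongrightarrow> 0) at_bot" and top: "(G \<longlongrightarrow> 1) at_top"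
  shows "Inf {w. u \<le> G w} \<le> z \<longleftrightarrow>
     (u \<le> 0 \<and> Inf (UNIV::real set) \<le> z) \<or> ((\<forall>n::nat. G (real n) < u) \<and> Inf ({}::real set) \<le> z)
     \<or> (0 < u \<and> (\<exists>n::nat. u \<le> G (real n)) \<and> u \<le> G z)"
proof -
  have nn: "\<And>w. 0 \<le> G w" using cdfG_bounds[OF mono bot top] by blast
  show ?thesis
  proof (cases "u \<le> 0")
    case True
    then have "{w. u \<le> G w} = UNIV" using nn by (auto intro: order_trans)
    moreover have "\<not> (\<forall>n::nat. G (real n) < u)" using True nn[of "real 0"] by (metis not_le order_trans)
    ultimately show ?thesis using True by auto
  next
    case False
    show ?thesis
    proof (cases "\<forall>n::nat. G (real n) < u")
      case True
      have "{w. u \<le> G w} = {}"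
      proof (safe)
        fix w assume "u \<le> G w"
        obtain n :: nat where "w \<le> real n" using real_arch_simple by blast
        then have "G w \<le> G (real n)" using mono by (auto simp: mono_def)
        then show "w \<in> {}" using True[rule_format, of n] \<open>u \<le> G w\<close> by simp
      qed
      then show ?thesis using True False by auto
    next
      case nt: False
      then obtain n :: nat where n: "u \<le> G (real n)" by (auto simp: not_less)
      then have "Inf {w. u \<le> G w} \<le> z \<longleftrightarrow> u \<le> G z"
        using False by (intro quantile_props[OF mono rc bot]) auto
      then show ?thesis using False n by (auto simp: not_less) (metis n not_le)
    qed
  qed
qed

lemma ind_le_meas: "(\<lambda>q. indicator {..fst (fst q)} (snd q) :: ennreal) \<in> borel_measurable ((borel \<Otimes>\<^sub>M (borel :: 'b::topological_space measure)) \<Otimes>\<^sub>M (lborel :: real measure))"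
proof -
  have "(\<lambda>q. if snd q \<le> (fst (fst q) :: real) then 1 else 0 :: ennreal) \<in> borel_measurable ((borel \<Otimes>\<^sub>M (borel :: 'b measure)) \<Otimes>\<^sub>M borel)" by measurable
  then have m: "(\<lambda>q. if snd q \<le> (fst (fst q) :: real) then 1 else 0 :: ennreal) \<in> borel_measurable ((borel \<Otimes>\<^sub>M (borel :: 'b measure)) \<Otimes>\<^sub>M (lborel :: real measure))"
    by (simp add: measurable_cong_sets[OF sets_pair_measure_cong[OF refl sets_lborel] refl])
  have eq: "(\<lambda>q. indicator {..fst (fst q)} (snd q) :: ennreal) = (\<lambda>q. if snd q \<le> (fst (fst q) :: real) then 1 else 0)"
    by (auto simp: indicator_def)
  show ?thesis unfolding eq by (rule m)
qed
theorem proposition1: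
  fixes M :: "'a measure"
    and X :: "'a \<Rightarrow> real ^ 'd"
    and Z :: "'a \<Rightarrow> real"
    and A :: "'a \<Rightarrow> real"
    and Apot :: "real \<Rightarrow> 'a \<Rightarrow> real"
    and \<pi> :: "real \<Rightarrow> real ^ 'd \<Rightarrow> real"
    and Pi_Z :: "real \<Rightarrow> real ^ 'd \<Rightarrow> real"
    and Q :: "real \<Rightarrow> real ^ 'd \<Rightarrow> real"
    and ZQ :: "'a \<Rightarrow> real"
  assumes P: "prob_space M"
    and X_meas: "X \<in> borel_measurable M"
    and Z_meas: "Z \<in> borel_measurable M"
    and A_meas: "A \<in> borel_measurable M"
    \<comment> \<open>conditional density \<pi>(z | x) of Z given X\<close>
    and dens_meas: "(\<lambda>(t, x). \<pi> t x) \<in> borel_measurable (borel \<Otimes>\<^sub>M borel)"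
    and dens_nonneg: "\<And>t x. 0 \<le> \<pi> t x"
    and dens_norm: "\<And>x. (\<integral>\<^sup>+ t. ennreal (\<pi> t x) \<partial>lborel) = 1"
    and dens_cond: "\<And>C B. C \<in> sets borel \<Longrightarrow> B \<in> sets borel \<Longrightarrow>
        emeasure M {\<omega> \<in> space M. Z \<omega> \<in> C \<and> X \<omega> \<in> B}
        = (\<integral>\<^sup>+ \<omega>. indicator B (X \<omega>) *
              (\<integral>\<^sup>+ t. indicator C t * ennreal (\<pi> t (X \<omega>)) \<partial>lborel) \<partial>M)"
    \<comment> \<open>conditional CDF Pi_Z(z | x) of Z given X\<close>
    and Pi_def: "\<And>z x. Pi_Z z x = (LBINT t:{..z}. \<pi> t x)"
    \<comment> \<open>binary treatment, potential treatments, consistency\<close>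
    and A_bin: "\<And>\<omega>. \<omega> \<in> space M \<Longrightarrow> A \<omega> \<in> {0, 1}"
    and Apot_bin: "\<And>z \<omega>. \<omega> \<in> space M \<Longrightarrow> Apot z \<omega> \<in> {0, 1}"
    and consistency: "AE \<omega> in M. Apot (Z \<omega>) \<omega> = A \<omega>"
    \<comment> \<open>target conditional CDF Q and the shifted instrument Z_Q\<close>
    and Q_cdf: "is_cond_cdf Q borel"
    and ZQ_def: "ZQ = (\<lambda>\<omega>. cond_quantile Q (Pi_Z (Z \<omega>) (X \<omega>)) (X \<omega>))"
  shows "(\<forall>z. \<forall>B \<in> sets borel.
            measure M {\<omega> \<in> space M. ZQ \<omega> \<le> z \<and> X \<omega> \<in> B}
            = (\<integral>\<omega>. indicator B (X \<omega>) * Q z (X \<omega>) \<partial>M))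
      \<and> ((AE \<omega> in M. \<forall>z z'. z < z' \<longrightarrow> Apot z \<omega> \<le> Apot z' \<omega>) \<longrightarrow>
           (AE \<omega> in M. \<forall>z. Q z (X \<omega>) \<le> Pi_Z z (X \<omega>)) \<longrightarrow>
           (AE \<omega> in M. A \<omega> \<le> Apot (ZQ \<omega>) \<omega>))
      \<and> ((AE \<omega> in M. \<forall>z z'. z < z' \<longrightarrow> Apot z \<omega> \<le> Apot z' \<omega>) \<longrightarrow>
           (AE \<omega> in M. \<forall>z. Pi_Z z (X \<omega>) \<le> Q z (X \<omega>)) \<longrightarrow>
           (AE \<omega> in M. Apot (ZQ \<omega>) \<omega> \<le> A \<omega>))"
proof -
  interpret prob_space M by (rule P)
  note [measurable] = X_meas Z_meas A_meas
  have Qm[measurable]: "\<And>z. (\<lambda>x. Q z x) \<in> borel_measurable borel"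
    and Qmono: "\<And>x. mono (\<lambda>z. Q z x)" and Qrc: "\<And>x z. continuous (at_right z) (\<lambda>z. Q z x)"
    and Qbot: "\<And>x. ((\<lambda>z. Q z x) \<longlongrightarrow> 0) at_bot" and Qtop: "\<And>x. ((\<lambda>z. Q z x) \<longlongrightarrow> 1) at_top"
    using Q_cdf unfolding is_cond_cdf_def by auto
  have Qb: "\<And>z x. 0 \<le> Q z x \<and> Q z x \<le> 1" using cdfG_bounds[OF Qmono Qbot Qtop] by auto
  have pim[measurable]: "(\<lambda>t. \<pi> t x) \<in> borel_measurable borel" for x
    using measurable_compose[OF measurable_Pair[OF measurable_ident measurable_const[of x borel]] dens_meas]
    by simp
  define D where "D x = density lborel (\<lambda>t. ennreal (\<pi> t x))" for x
  have Drd: "\<And>x. real_distribution (D x)" and Dat: "\<And>x y. measure (D x) {y} = 0"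
    and Dcdf: "\<And>x z. cdf (D x) z = Pi_Z z x"
    and Dem: "\<And>x A. A \<in> sets borel \<Longrightarrow> emeasure (D x) A = (\<integral>\<^sup>+ t. indicator A t * ennreal (\<pi> t x) \<partial>lborel)"
    using dens_dist[OF pim dens_nonneg dens_norm] unfolding D_def Pi_def by auto
  have Pib: "\<And>t x. 0 \<le> Pi_Z t x \<and> Pi_Z t x \<le> 1"
    using Drd real_distribution.cdf_bounded_prob finite_borel_measure.cdf_nonneg real_distribution.finite_borel_measure_M Dcdf by metis
  have Pimono: "\<And>t t' x. t \<le> t' \<Longrightarrow> Pi_Z t x \<le> Pi_Z t' x"
    using Drd finite_borel_measure.cdf_nondecreasing real_distribution.finite_borel_measure_M Dcdf by metis
  have Pim[measurable]: "(\<lambda>p. Pi_Z (fst p) (snd p)) \<in> borel_measurable (borel \<Otimes>\<^sub>M borel)"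
  proof -
    have eq: "Pi_Z t x = enn2real (\<integral>\<^sup>+ s. indicator {..t} s * ennreal (\<pi> s x) \<partial>lborel)" for t x
      using Dcdf[of x t] Dem[of "{..t}" x] by (simp add: cdf_def measure_def)
    have pi2[measurable]: "(\<lambda>q. \<pi> (snd q) (snd (fst q))) \<in> borel_measurable ((borel \<Otimes>\<^sub>M borel) \<Otimes>\<^sub>M lborel)"
      using measurable_compose[OF measurable_Pair[OF measurable_snd measurable_compose[OF measurable_fst measurable_snd]] dens_meas]
      by (simp add: measurable_cong_sets[OF sets_pair_measure_cong[OF refl sets_lborel] refl])
    have ind[measurable]: "(\<lambda>q. indicator {..fst (fst q)} (snd q) :: ennreal) \<in> borel_measurable ((borel \<Otimes>\<^sub>M (borel :: (real^'d) measure)) \<Otimes>\<^sub>M (lborel :: real measure))"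
      by (rule ind_le_meas)
    have "(\<lambda>p. \<integral>\<^sup>+ s. indicator {..fst p} s * ennreal (\<pi> s (snd p)) \<partial>lborel) \<in> borel_measurable (borel \<Otimes>\<^sub>M borel)"
      by (rule lborel.borel_measurable_nn_integral) (simp add: case_prod_beta)
    then show ?thesis unfolding eq by measurable
  qed
  define U where "U \<omega> = Pi_Z (Z \<omega>) (X \<omega>)" for \<omega>
  have Um[measurable]: "U \<in> borel_measurable M"
    using measurable_compose[OF measurable_Pair[OF Z_meas X_meas] Pim] unfolding U_def by simp
  have ZQU: "ZQ \<omega> = Inf {w. U \<omega> \<le> Q w (X \<omega>)}" for \<omega>
    unfolding ZQ_def U_def cond_quantile_def by simp
  have hD: "\<And>S x B. B \<in> sets borel \<Longrightarrow> (\<And>t. (t, x) \<in> S \<longleftrightarrow> t \<in> B) \<Longrightarrow>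
      (\<integral>\<^sup>+ t. indicator S (t, x) * ennreal (\<pi> t x) \<partial>lborel) = emeasure (D x) B"
    by (subst Dem) (auto intro!: nn_integral_cong simp: indicator_def)
  have KR: "emeasure M {\<omega>\<in>space M. (Z \<omega>, X \<omega>) \<in> S}
     = (\<integral>\<^sup>+\<omega>. (\<integral>\<^sup>+t. indicator S (t, X \<omega>) * ennreal (\<pi> t (X \<omega>)) \<partial>lborel) \<partial>M)"
    if "S \<in> sets (borel \<Otimes>\<^sub>M (borel :: (real^'d) measure))" for S
    using kernel_rep[OF P X_meas Z_meas dens_meas dens_nonneg dens_norm, of S] dens_cond that by blast
  have Pir[measurable]: "(\<lambda>x. Pi_Z r x) \<in> borel_measurable borel" for r
    using measurable_compose[OF measurable_Pair[OF measurable_const[of r borel] measurable_ident] Pim]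
    by simp
  have Pit[measurable]: "(\<lambda>t. Pi_Z t x) \<in> borel_measurable borel" for x
    using measurable_compose[OF measurable_Pair[OF measurable_ident measurable_const[of x borel]] Pim]
    by simp
  have Pisets: "{t. Pi_Z t x \<le> c} \<in> sets borel" "{t. c \<le> Pi_Z t x} \<in> sets borel" for x c
    by measurable
  have N1: "AE \<omega> in M. 0 < U \<omega> \<and> U \<omega> < 1"
  proof -
    define S0 where "S0 = {p :: real \<times> (real^'d). Pi_Z (fst p) (snd p) \<le> 0 \<or> 1 \<le> Pi_Z (fst p) (snd p)}"
    have S0m[measurable]: "S0 \<in> sets (borel \<Otimes>\<^sub>M (borel :: (real^'d) measure))"
    proof -
      have "{p \<in> space (borel \<Otimes>\<^sub>M (borel :: (real^'d) measure)). Pi_Z (fst p) (snd p) \<le> 0 \<or> 1 \<le> Pi_Z (fst p) (snd p)} \<in> sets (borel \<Otimes>\<^sub>M (borel :: (real^'d) measure))"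
        by measurable
      then show ?thesis unfolding S0_def by (simp add: space_pair_measure)
    qed
    have zero: "emeasure (D x) {t. Pi_Z t x \<le> 0 \<or> 1 \<le> Pi_Z t x} = 0" for x
    proof -
      interpret rd: real_distribution "D x" by (rule Drd)
      have a: "measure (D x) {t. Pi_Z t x \<le> 0} = 0" using rd.cdf_le_measure[OF Dat, of 0] by (simp add: Dcdf)
      have b: "measure (D x) {t. 1 \<le> Pi_Z t x} = 0" using rd.cdf_top[OF Dat] by (simp add: Dcdf)
      have "measure (D x) {t. Pi_Z t x \<le> 0 \<or> 1 \<le> Pi_Z t x} \<le> measure (D x) {t. Pi_Z t x \<le> 0} + measure (D x) {t. 1 \<le> Pi_Z t x}"
        unfolding Collect_disj_eq by (rule measure_Un_le) (simp_all add: Pisets)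
      then have "measure (D x) {t. Pi_Z t x \<le> 0 \<or> 1 \<le> Pi_Z t x} = 0" using a b measure_nonneg[of "D x"]
        by (metis add.right_neutral order_antisym)
      then show ?thesis using rd.emeasure_eq_measure by simp
    qed
    have "emeasure M {\<omega>\<in>space M. (Z \<omega>, X \<omega>) \<in> S0} = (\<integral>\<^sup>+\<omega>. (\<integral>\<^sup>+t. indicator S0 (t, X \<omega>) * ennreal (\<pi> t (X \<omega>)) \<partial>lborel) \<partial>M)"
      by (rule KR[OF S0m])
    also have "\<dots> = (\<integral>\<^sup>+\<omega>. 0 \<partial>M)"
    proof (intro nn_integral_cong)
      fix \<omega>
      show "(\<integral>\<^sup>+t. indicator S0 (t, X \<omega>) * ennreal (\<pi> t (X \<omega>)) \<partial>lborel) = 0"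
        by (subst hD[of "{t. Pi_Z t (X \<omega>) \<le> 0 \<or> 1 \<le> Pi_Z t (X \<omega>)}"]) (auto simp: S0_def zero)
    qed
    finally have null: "{\<omega>\<in>space M. (Z \<omega>, X \<omega>) \<in> S0} \<in> null_sets M"
      by (intro null_setsI) (auto, measurable)
    show ?thesis
      by (rule AE_I'[OF null]) (auto simp: S0_def U_def not_less)
  qed
  have N2r: "AE \<omega> in M. \<not> (r < Z \<omega> \<and> U \<omega> \<le> Pi_Z r (X \<omega>))" for r
  proof -
    define S0 where "S0 = {p :: real \<times> (real^'d). r < fst p \<and> Pi_Z (fst p) (snd p) \<le> Pi_Z r (snd p)}"
    have S0m[measurable]: "S0 \<in> sets (borel \<Otimes>\<^sub>M (borel :: (real^'d) measure))"
    proof -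
      have "{p \<in> space (borel \<Otimes>\<^sub>M (borel :: (real^'d) measure)). r < fst p \<and> Pi_Z (fst p) (snd p) \<le> Pi_Z r (snd p)} \<in> sets (borel \<Otimes>\<^sub>M (borel :: (real^'d) measure))"
        by measurable
      then show ?thesis unfolding S0_def by (simp add: space_pair_measure)
    qed
    have zero: "emeasure (D x) {t. r < t \<and> Pi_Z t x \<le> Pi_Z r x} = 0" for x
    proof -
      interpret rd: real_distribution "D x" by (rule Drd)
      have "measure (D x) {t. r < t \<and> Pi_Z t x \<le> Pi_Z r x} = 0"
        using rd.cdf_flat[OF Dat, of r] by (simp add: Dcdf)
      then show ?thesis using rd.emeasure_eq_measure by simp
    qed
    have "emeasure M {\<omega>\<in>space M. (Z \<omega>, X \<omega>) \<in> S0} = (\<integral>\<^sup>+\<omega>. (\<integral>\<^sup>+t. indicator S0 (t, X \<omega>) * ennreal (\<pi> t (X \<omega>)) \<partial>lborel) \<partial>M)"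
      by (rule KR[OF S0m])
    also have "\<dots> = (\<integral>\<^sup>+\<omega>. 0 \<partial>M)"
    proof (intro nn_integral_cong)
      fix \<omega>
      show "(\<integral>\<^sup>+t. indicator S0 (t, X \<omega>) * ennreal (\<pi> t (X \<omega>)) \<partial>lborel) = 0"
        by (subst hD[of "{t. r < t \<and> Pi_Z t (X \<omega>) \<le> Pi_Z r (X \<omega>)}"]) (auto simp: S0_def zero)
    qed
    finally have null: "{\<omega>\<in>space M. (Z \<omega>, X \<omega>) \<in> S0} \<in> null_sets M"
      by (intro null_setsI) (auto, measurable)
    show ?thesis
      by (rule AE_I'[OF null]) (auto simp: S0_def U_def)
  qed
  have N2: "AE \<omega> in M. \<forall>r\<in>\<rat>. \<not> (r < Z \<omega> \<and> U \<omega> \<le> Pi_Z r (X \<omega>))"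
    by (rule AE_ball_countable'[OF N2r countable_rat])
  have exQ: "\<exists>w. u \<le> Q w x" if "u < 1" for u x
  proof -
    have "eventually (\<lambda>w. u < Q w x) at_top" using Qtop[of x] that order_tendstoD(1) by blast
    then obtain b where "\<And>w. w \<ge> b \<Longrightarrow> u < Q w x" by (auto simp: eventually_at_top_linorder)
    then show ?thesis by (metis order_refl less_imp_le)
  qed
  have qp: "ZQ \<omega> \<le> y \<longleftrightarrow> U \<omega> \<le> Q y (X \<omega>)" if "0 < U \<omega>" "U \<omega> < 1" for \<omega> y
    unfolding ZQU by (rule quantile_props[OF Qmono Qrc Qbot that(1) exQ[OF that(2)]])
  have ZQm[measurable]: "ZQ \<in> borel_measurable M"
  proof (rule borel_measurableI_le)
    fix a
    have "{\<omega>\<in>space M. ZQ \<omega> \<le> a} = {\<omega>\<in>space M. (U \<omega> \<le> 0 \<and> Inf (UNIV::real set) \<le> a)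
       \<or> ((\<forall>n::nat. Q (real n) (X \<omega>) < U \<omega>) \<and> Inf ({}::real set) \<le> a)
       \<or> (0 < U \<omega> \<and> (\<exists>n::nat. U \<omega> \<le> Q (real n) (X \<omega>)) \<and> U \<omega> \<le> Q a (X \<omega>))}"
      unfolding ZQU using quantile_le_iff[OF Qmono Qrc Qbot Qtop] by simp
    also have "\<dots> \<in> sets M" by measurable
    finally show "{\<omega>\<in>space M. ZQ \<omega> \<le> a} \<in> sets M" .
  qed
  have part1: "measure M {\<omega> \<in> space M. ZQ \<omega> \<le> z \<and> X \<omega> \<in> B}
            = (\<integral>\<omega>. indicator B (X \<omega>) * Q z (X \<omega>) \<partial>M)" if B[measurable]: "B \<in> sets borel" for z B
  proof -
    define S2 where "S2 = {p :: real \<times> (real^'d). Pi_Z (fst p) (snd p) \<le> Q z (snd p) \<and> snd p \<in> B}"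
    have S2m[measurable]: "S2 \<in> sets (borel \<Otimes>\<^sub>M (borel :: (real^'d) measure))"
    proof -
      have "{p \<in> space (borel \<Otimes>\<^sub>M (borel :: (real^'d) measure)). Pi_Z (fst p) (snd p) \<le> Q z (snd p) \<and> snd p \<in> B} \<in> sets (borel \<Otimes>\<^sub>M (borel :: (real^'d) measure))"
        by measurable
      then show ?thesis unfolding S2_def by (simp add: space_pair_measure)
    qed
    have per: "(\<integral>\<^sup>+t. indicator S2 (t, x) * ennreal (\<pi> t x) \<partial>lborel) = ennreal (indicator B x * Q z x)" for x
    proof (cases "x \<in> B")
      case True
      interpret rd: real_distribution "D x" by (rule Drd)
      have "measure (D x) {t. Pi_Z t x \<le> Q z x} = Q z x"
        using rd.cdf_le_measure[OF Dat, of "Q z x"] Qb[of z x] by (simp add: Dcdf)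
      then have "emeasure (D x) {t. Pi_Z t x \<le> Q z x} = ennreal (Q z x)"
        using rd.emeasure_eq_measure by simp
      then show ?thesis using True
        by (subst hD[of "{t. Pi_Z t x \<le> Q z x}"]) (auto simp: S2_def Pisets)
    next
      case False
      then show ?thesis by (subst hD[of "{}"]) (auto simp: S2_def)
    qed
    define E1 where "E1 = {\<omega> \<in> space M. ZQ \<omega> \<le> z \<and> X \<omega> \<in> B}"
    define E2 where "E2 = {\<omega> \<in> space M. (Z \<omega>, X \<omega>) \<in> S2}"
    have E1m: "E1 \<in> sets M" unfolding E1_def by measurable
    have E2m: "E2 \<in> sets M" unfolding E2_def by measurable
    have "AE \<omega> in M. \<omega> \<in> E1 \<longleftrightarrow> \<omega> \<in> E2"
      using N1
    proof eventually_elim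
      case (elim \<omega>)
      then show ?case using qp[of \<omega> z] by (auto simp: E1_def E2_def S2_def U_def)
    qed
    then have "measure M E1 = measure M E2" by (rule measure_eq_AE[OF _ E1m E2m])
    also have "\<dots> = enn2real (\<integral>\<^sup>+\<omega>. ennreal (indicator B (X \<omega>) * Q z (X \<omega>)) \<partial>M)"
      unfolding measure_def E2_def KR[OF S2m] per ..
    also have "\<dots> = (\<integral>\<omega>. indicator B (X \<omega>) * Q z (X \<omega>) \<partial>M)"
      by (rule integral_eq_nn_integral[symmetric]) (auto simp: Qb)
    finally show ?thesis unfolding E1_def .
  qed
  have part2: "AE \<omega> in M. A \<omega> \<le> Apot (ZQ \<omega>) \<omega>"
    if mon: "AE \<omega> in M. \<forall>z z'. z < z' \<longrightarrow> Apot z \<omega> \<le> Apot z' \<omega>"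
      and dom: "AE \<omega> in M. \<forall>z. Q z (X \<omega>) \<le> Pi_Z z (X \<omega>)"
    using N1 N2 consistency mon dom
  proof eventually_elim
    case (elim \<omega>)
    then have u: "0 < U \<omega>" "U \<omega> < 1" and nb: "\<forall>r\<in>\<rat>. \<not> (r < Z \<omega> \<and> U \<omega> \<le> Pi_Z r (X \<omega>))"
      and cons: "Apot (Z \<omega>) \<omega> = A \<omega>" and mo: "\<forall>z z'. z < z' \<longrightarrow> Apot z \<omega> \<le> Apot z' \<omega>"
      and dm: "\<forall>z. Q z (X \<omega>) \<le> Pi_Z z (X \<omega>)" by auto
    have "Z \<omega> \<le> ZQ \<omega>"
    proof (rule ccontr)
      assume "\<not> Z \<omega> \<le> ZQ \<omega>" then have lt: "ZQ \<omega> < Z \<omega>" by simp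
      obtain r where r: "r \<in> \<rat>" "ZQ \<omega> < r" "r < Z \<omega>" using Rats_dense_in_real[OF lt] by blast
      have "U \<omega> \<le> Q (ZQ \<omega>) (X \<omega>)" using qp[OF u, of "ZQ \<omega>"] by simp
      also have "\<dots> \<le> Pi_Z (ZQ \<omega>) (X \<omega>)" using dm by simp
      also have "\<dots> \<le> Pi_Z r (X \<omega>)" using Pimono r(2) by simp
      finally show False using nb r by auto
    qed
    then show ?case
    proof (cases "Z \<omega> = ZQ \<omega>")
      case True then show ?thesis using cons by simp
    next
      case False then have "Z \<omega> < ZQ \<omega>" using \<open>Z \<omega> \<le> ZQ \<omega>\<close> by simp
      then show ?thesis using mo cons by (metis order_refl)
    qed
  qed
  have part3: "AE \<omega> in M. Apot (ZQ \<omega>) \<omega> \<le> A \<omega>"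
    if mon: "AE \<omega> in M. \<forall>z z'. z < z' \<longrightarrow> Apot z \<omega> \<le> Apot z' \<omega>"
      and dom: "AE \<omega> in M. \<forall>z. Pi_Z z (X \<omega>) \<le> Q z (X \<omega>)"
    using N1 consistency mon dom
  proof eventually_elim
    case (elim \<omega>)
    then have u: "0 < U \<omega>" "U \<omega> < 1"
      and cons: "Apot (Z \<omega>) \<omega> = A \<omega>" and mo: "\<forall>z z'. z < z' \<longrightarrow> Apot z \<omega> \<le> Apot z' \<omega>"
      and dm: "\<forall>z. Pi_Z z (X \<omega>) \<le> Q z (X \<omega>)" by auto
    have "ZQ \<omega> \<le> Z \<omega>" using qp[OF u] dm by (simp add: U_def)
    then show ?case
    proof (cases "Z \<omega> = ZQ \<omega>")
      case True then show ?thesis using cons by simp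
    next
      case False then have "ZQ \<omega> < Z \<omega>" using \<open>ZQ \<omega> \<le> Z \<omega>\<close> by simp
      then show ?thesis using mo cons by (metis order_refl)
    qed
  qed
  show ?thesis using part1 part2 part3 by blast
qed

end
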